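(* Let $n\ge 2$ and let $\mathbf{p}=(\mathbf{p}_1,\dots,\mathbf{p}_N)$ be any configuration of points in $\mathbb{E}^n$. Then, as $r\to\infty$, $$\mathrm{Vol}_n\Big[\bigcap_{i=1}^N B_n(\mathbf{p}_i,r)\Big]=\delta_n r^n - M_n[\mathrm{Conv}\{\mathbf{p}_1,\dots,\mathbf{p}_N\}]\,r^{n-1}+o(r^{n-1}),$$ where $\delta_n=\mathrm{Vol}_n[B_n(0,1)]$.
   Context: $B_n(\mathbf{x},r)$ is the closed ball of radius $r$ centered at $\mathbf{x}$; $\mathrm{Vol}_n$ is $n$-dimensional volume; $\mathrm{Conv}$ is convex hull. For a compact convex $K\subset\mathbb{E}^n$, $M_n[K]=\int_{S^{n-1}}\max\{\langle x,u\rangle: x\in K\}\,d\sigma(u)$, with $\sigma$ the Lebesgue surface measure on the unit sphere $S^{n-1}$. *)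

theory Defs
  imports "HOL-Analysis.Analysis" "HOL-Library.Landau_Symbols"
begin

text \<open>Lebesgue surface measure on the unit sphere S^{n-1} of a Euclidean space,
  defined via the cone construction: sigma(A) = n * Vol_n {t u. u in A, 0 < t <= 1}.\<close>
definition sphere_measure :: "('a::euclidean_space) measure" where
  "sphere_measure =
     distr (scale_measure (of_nat DIM('a)) (restrict_space lborel (cball 0 1 - {0})))
           borel (\<lambda>x. x /\<^sub>R norm x)"

definition support_fun :: "('a::euclidean_space) set \<Rightarrow> 'a \<Rightarrow> real" where
  "support_fun K u = Sup ((\<lambda>x. x \<bullet> u) ` K)"

definition mean_support :: "('a::euclidean_space) set \<Rightarrow> real" where
  "mean_support K = integral\<^sup>L sphere_measure (support_fun K)"

end

theory Submission
  imports Defs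
begin

lemma scale_measure_density:
  assumes "0 \<le> c"
  shows "scale_measure (ennreal c) M = density M (\<lambda>_. ennreal c)"
proof (rule measure_eqI)
  show "sets (scale_measure (ennreal c) M) = sets (density M (\<lambda>_. ennreal c))" by simp
  fix A assume "A \<in> sets (scale_measure (ennreal c) M)"
  then have A: "A \<in> sets M" by simp
  then show "emeasure (scale_measure (ennreal c) M) A = emeasure (density M (\<lambda>_. ennreal c)) A"
    by (simp add: emeasure_density nn_integral_cmult_indicator)
qed

lemma sphere_integral_eq:
  fixes h :: "'a::euclidean_space \<Rightarrow> real"
  assumes h[measurable]: "h \<in> borel_measurable borel"
  shows "integral\<^sup>L sphere_measure h
     = real DIM('a) * integral\<^sup>L lborel (\<lambda>x. indicator (cball 0 1 - {0}) x * h (x /\<^sub>R norm x))"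
proof -
  let ?B = "cball (0::'a) 1 - {0}"
  let ?M = "restrict_space lborel ?B"
  have sc: "scale_measure (of_nat DIM('a)) ?M = density ?M (\<lambda>_. ennreal (real DIM('a)))"
    using scale_measure_density[of "real DIM('a)" ?M] by (simp add: ennreal_of_nat_eq_real_of_nat)
  have nm: "(\<lambda>x::'a. x /\<^sub>R norm x) \<in> measurable (scale_measure (of_nat DIM('a)) ?M) borel"
  proof -
    have "(\<lambda>x::'a. x /\<^sub>R norm x) \<in> measurable ?M borel"
      by (rule measurable_restrict_space1) measurable
    then show ?thesis using measurable_cong_sets[of "scale_measure (of_nat DIM('a)) ?M" ?M borel borel] by simp
  qed
  have "integral\<^sup>L sphere_measure h = integral\<^sup>L (scale_measure (of_nat DIM('a)) ?M) (\<lambda>x. h (x /\<^sub>R norm x))"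
    unfolding sphere_measure_def by (rule integral_distr[OF nm h])
  also have "\<dots> = integral\<^sup>L ?M (\<lambda>x. real DIM('a) *\<^sub>R h (x /\<^sub>R norm x))"
    unfolding sc by (rule integral_density) (auto intro: measurable_restrict_space1)
  also have "\<dots> = real DIM('a) * integral\<^sup>L ?M (\<lambda>x. h (x /\<^sub>R norm x))"
    by simp
  also have "integral\<^sup>L ?M (\<lambda>x. h (x /\<^sub>R norm x)) = integral\<^sup>L lborel (\<lambda>x. indicator ?B x * h (x /\<^sub>R norm x))"
    by (subst integral_restrict_space) auto
  finally show ?thesis .
qed


lemma support_hull:
  fixes P :: "'a::euclidean_space set"
  assumes "finite P" "P \<noteq> {}"
  shows "support_fun (convex hull P) u = Max ((\<lambda>x. x \<bullet> u) ` P)"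
  unfolding support_fun_def
proof (rule cSup_eq_maximum)
  let ?m = "Max ((\<lambda>x. x \<bullet> u) ` P)"
  have "?m \<in> (\<lambda>x. x \<bullet> u) ` P" by (rule Max_in) (use assms in auto)
  then obtain x where "x \<in> P" "x \<bullet> u = ?m" by auto
  then show "?m \<in> (\<lambda>x. x \<bullet> u) ` (convex hull P)"
    by (metis hull_subset image_eqI subsetD)
  have "convex hull P \<subseteq> {x. inner u x \<le> ?m}"
  proof (rule hull_minimal)
    show "P \<subseteq> {x. inner u x \<le> ?m}" using assms by (auto simp: inner_commute intro!: Max_ge)
    show "convex {x. inner u x \<le> ?m}" by (rule convex_halfspace_le)
  qed
  then show "y \<le> ?m" if "y \<in> (\<lambda>x. x \<bullet> u) ` (convex hull P)" for y
    using that by (auto simp: inner_commute)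
qed

lemma norm_diff_sq:
  fixes y p :: "'a::euclidean_space"
  assumes "y \<noteq> 0"
  shows "(norm (y - p))^2 = (norm y)^2 - 2 * norm y * (p \<bullet> (y /\<^sub>R norm y)) + (norm p)^2"
proof -
  have "(norm (y - p))^2 = y \<bullet> y - 2 * (y \<bullet> p) + p \<bullet> p"
    by (simp add: power2_norm_eq_inner inner_diff_left inner_diff_right inner_commute)
  moreover have "y \<bullet> p = norm y * (p \<bullet> (y /\<^sub>R norm y))"
    using assms by (simp add: inner_commute)
  ultimately show ?thesis by (simp add: power2_norm_eq_inner)
qed

lemma ray_upper:
  fixes y p :: "'a::euclidean_space"
  assumes "y \<noteq> 0" "norm p < r" "dist y p \<le> r"
  shows "norm y \<le> r + p \<bullet> (y /\<^sub>R norm y)"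
proof -
  let ?t = "norm y" and ?q = "p \<bullet> (y /\<^sub>R norm y)"
  have nv: "norm (y /\<^sub>R norm y) = 1" using assms by simp
  have "\<bar>?q\<bar> \<le> norm p * norm (y /\<^sub>R norm y)" by (rule Cauchy_Schwarz_ineq2)
  then have "\<bar>?q\<bar> \<le> norm p" using nv by simp
  then have "\<bar>?q\<bar>^2 \<le> (norm p)^2" by (intro power_mono) auto
  then have q: "?q^2 \<le> (norm p)^2" by simp
  have "(norm (y - p))^2 \<le> r^2"
    using assms by (simp add: dist_norm power_mono)
  moreover have "(?t - ?q)^2 = ?t^2 - 2 * ?t * ?q + ?q^2" using power2_diff[of ?t ?q] by linarith
  ultimately have "(?t - ?q)^2 \<le> r^2"
    using norm_diff_sq[OF assms(1), of p] q by linarith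
  moreover have "0 \<le> r" using assms(2) norm_ge_zero[of p] by linarith
  ultimately have "?t - ?q \<le> r" by (rule power2_le_imp_le)
  then show ?thesis by simp
qed

lemma ray_lower:
  fixes y p :: "'a::euclidean_space"
  assumes "y \<noteq> 0" "2 * norm p \<le> r" "0 < r"
    and le: "norm y \<le> r + p \<bullet> (y /\<^sub>R norm y) - (norm p)^2 / r"
  shows "dist y p \<le> r"
proof -
  let ?t = "norm y" and ?q = "p \<bullet> (y /\<^sub>R norm y)" and ?a = "norm p"
  have nv: "norm (y /\<^sub>R norm y) = 1" using assms by simp
  have "\<bar>?q\<bar> \<le> norm p * norm (y /\<^sub>R norm y)" by (rule Cauchy_Schwarz_ineq2)
  then have qa: "\<bar>?q\<bar> \<le> ?a" using nv by simp
  then have "\<bar>?q\<bar>^2 \<le> ?a^2" by (intro power_mono) auto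
  then have q: "?q^2 \<le> ?a^2" by simp
  let ?w = "r - ?a^2 / r"
  have "?a * (2 * ?a) \<le> ?a * r" using assms(2) by (intro mult_left_mono) auto
  then have a2: "?a^2 / r \<le> ?a / 2"
    using assms(3) by (simp add: divide_le_eq power2_eq_square mult_ac)
  have w0: "?a \<le> ?w" using a2 assms(2) norm_ge_zero[of p] by linarith
  have "?t - ?q \<le> ?w" using le by simp
  moreover have "- ?w \<le> ?t - ?q" using w0 qa by (smt (verit) norm_ge_zero)
  ultimately have "\<bar>?t - ?q\<bar> \<le> ?w" by linarith
  then have "\<bar>?t - ?q\<bar>^2 \<le> ?w^2" by (intro power_mono) auto
  then have h1: "(?t - ?q)^2 \<le> ?w^2" by simp
  have h2: "?w^2 = r^2 - 2 * ?a^2 + (?a^2/r)^2"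
    using assms(3) by (simp add: power2_eq_square field_simps)
  have h3: "(?a^2/r)^2 \<le> ?a^2"
  proof -
    have "?a^2/r \<le> ?a" using a2 norm_ge_zero[of p] by linarith
    moreover have "0 \<le> ?a^2/r" using assms(3) by simp
    ultimately show ?thesis by (simp add: power_mono)
  qed
  have q0: "0 \<le> ?q^2" by simp
  have "(?t - ?q)^2 + ?a^2 - ?q^2 \<le> r^2" using h1 h2 h3 q0 by linarith
  moreover have "(?t - ?q)^2 = ?t^2 - 2 * ?t * ?q + ?q^2" using power2_diff[of ?t ?q] by linarith
  ultimately have "(norm (y - p))^2 \<le> r^2"
    using norm_diff_sq[OF assms(1), of p] by linarith
  moreover have "0 \<le> r" using assms(3) by simp
  ultimately have "norm (y - p) \<le> r" by (rule power2_le_imp_le)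
  then show ?thesis by (simp add: dist_norm)
qed

lemma binom_bound:
  fixes r b :: real
  assumes "2 \<le> n" "1 \<le> r"
  shows "\<bar>(r - b)^n - (r^n - n * b * r^(n-1))\<bar> \<le> r^(n-2) * (1 + \<bar>b\<bar>)^n"
proof -
  define f where "f k = real (n choose k) * (-b)^k * r^(n-k)" for k
  have "(r - b)^n = (-b + r)^n" by simp
  also have "\<dots> = (\<Sum>k\<le>n. f k)" unfolding f_def binomial_ring by (simp add: mult_ac)
  also have "{..n} = {0,1} \<union> {2..n}" using assms by auto
  also have "sum f ({0,1} \<union> {2..n}) = f 0 + f 1 + sum f {2..n}"
    by (subst sum.union_disjoint) auto
  also have "f 0 + f 1 = r^n - n * b * r^(n-1)" by (simp add: f_def)
  finally have eq: "(r - b)^n - (r^n - n * b * r^(n-1)) = sum f {2..n}" by simp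
  have "\<bar>sum f {2..n}\<bar> \<le> (\<Sum>k\<in>{2..n}. \<bar>f k\<bar>)" by (rule sum_abs)
  also have "\<dots> \<le> (\<Sum>k\<in>{2..n}. r^(n-2) * (real (n choose k) * \<bar>b\<bar>^k * 1^(n-k)))"
  proof (rule sum_mono)
    fix k assume k: "k \<in> {2..n}"
    have "r^(n-k) \<le> r^(n-2)" using k assms by (intro power_increasing) auto
    then have "real (n choose k) * \<bar>b\<bar>^k * r^(n-k) \<le> real (n choose k) * \<bar>b\<bar>^k * r^(n-2)"
      by (intro mult_left_mono) auto
    then show "\<bar>f k\<bar> \<le> r^(n-2) * (real (n choose k) * \<bar>b\<bar>^k * 1^(n-k))"
      using assms by (simp add: f_def abs_mult power_abs mult_ac)
  qed
  also have "\<dots> = r^(n-2) * (\<Sum>k\<in>{2..n}. real (n choose k) * \<bar>b\<bar>^k * 1^(n-k))"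
    by (simp add: sum_distrib_left)
  also have "\<dots> \<le> r^(n-2) * (\<Sum>k\<le>n. real (n choose k) * \<bar>b\<bar>^k * 1^(n-k))"
    using assms by (intro mult_left_mono sum_mono2) auto
  also have "(\<Sum>k\<le>n. real (n choose k) * \<bar>b\<bar>^k * 1^(n-k)) = (\<bar>b\<bar> + 1)^n"
    by (simp add: binomial_ring)
  finally show ?thesis using eq by (simp add: add.commute)
qed


lemma levels:
  fixes H :: "'a::euclidean_space \<Rightarrow> real" and R \<eta> :: real and m :: nat
  assumes Hm[measurable]: "H \<in> borel_measurable borel"
    and Hb: "\<And>w. norm w = 1 \<Longrightarrow> \<bar>H w\<bar> \<le> R"
    and eta: "0 < \<eta>"
    and m_def: "m = nat \<lceil>2 * R / \<eta>\<rceil> + 1"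
    and L_def: "L = (\<lambda>j::nat. - R + real j * \<eta>)"
    and C_def: "C = (\<lambda>j. {x::'a. x \<noteq> 0 \<and> norm x \<le> 1 \<and> L j \<le> H (x /\<^sub>R norm x) \<and> H (x /\<^sub>R norm x) < L j + \<eta>})"
  defines "B0 \<equiv> cball (0::'a) 1 - {0}"
  shows "\<And>j. C j \<in> sets lborel"
    and "disjoint_family_on C {..<m}"
    and "(\<Union>j<m. C j) = B0"
    and "(\<Sum>j<m. measure lborel (C j)) = measure lebesgue (cball (0::'a) 1)"
    and "(\<Sum>j<m. L j * measure lborel (C j)) \<le> (LBINT x. indicator B0 x * H (x /\<^sub>R norm x))"
    and "(LBINT x. indicator B0 x * H (x /\<^sub>R norm x)) \<le> (\<Sum>j<m. L j * measure lborel (C j)) + \<eta> * measure lebesgue (cball (0::'a) 1)"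
proof -
  show Cm: "C j \<in> sets lborel" for j
    unfolding C_def by measurable
  have B0m[measurable]: "B0 \<in> sets borel" unfolding B0_def by measurable
  have Hn[measurable]: "(\<lambda>x::'a. H (x /\<^sub>R norm x)) \<in> borel_measurable borel" by measurable
  show dj: "disjoint_family_on C {..<m}"
    unfolding disjoint_family_on_def
  proof (intro ballI impI)
    fix i j assume ij: "i \<in> {..<m}" "j \<in> {..<m}" "i \<noteq> j"
    show "C i \<inter> C j = {}"
    proof (rule ccontr)
      assume "C i \<inter> C j \<noteq> {}"
      then obtain x where x: "x \<in> C i" "x \<in> C j" by blast
      let ?h = "H (x /\<^sub>R norm x)"
      have "L i \<le> ?h" "?h < L i + \<eta>" "L j \<le> ?h" "?h < L j + \<eta>" using x by (auto simp: C_def)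
      then have "real i * \<eta> < real j * \<eta> + \<eta>" "real j * \<eta> < real i * \<eta> + \<eta>" by (auto simp: L_def)
      then have "real i * \<eta> < (real j + 1) * \<eta>" "real j * \<eta> < (real i + 1) * \<eta>"
        by (simp_all add: distrib_right)
      then have "real i < real j + 1" "real j < real i + 1" using eta
        by (auto dest: mult_right_less_imp_less)
      then show False using ij(3) by linarith
    qed
  qed
  have cover: "\<exists>j<m. x \<in> C j" if x: "x \<in> B0" for x
  proof -
    let ?h = "H (x /\<^sub>R norm x)"
    have x0: "x \<noteq> 0" "norm x \<le> 1" using x by (auto simp: B0_def)
    then have "\<bar>?h\<bar> \<le> R" by (intro Hb) simp
    then have hb: "- R \<le> ?h" "?h \<le> R" by auto
    define y where "y = (?h + R) / \<eta>"
    have y0: "0 \<le> y" using hb eta by (simp add: y_def)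
    define j where "j = nat \<lfloor>y\<rfloor>"
    have jr: "real j = of_int \<lfloor>y\<rfloor>" using y0 by (simp add: j_def)
    have "of_int \<lfloor>y\<rfloor> \<le> y" "y < of_int \<lfloor>y\<rfloor> + 1" by linarith+
    then have a: "real j \<le> y" "y < real j + 1" using jr by auto
    have ye: "y * \<eta> = ?h + R" using eta by (simp add: y_def)
    have "real j * \<eta> \<le> y * \<eta>" using a eta by (intro mult_right_mono) auto
    moreover have "y * \<eta> < (real j + 1) * \<eta>" using a eta by (intro mult_strict_right_mono) auto
    ultimately have j1: "real j * \<eta> \<le> ?h + R" "?h + R < real j * \<eta> + \<eta>"
      using ye by (auto simp: distrib_right)
    have "y \<le> 2 * R / \<eta>" using hb eta by (simp add: y_def divide_right_mono)
    then have "\<lfloor>y\<rfloor> \<le> \<lceil>2 * R / \<eta>\<rceil>" by linarith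
    then have "j < m" using y0 by (simp add: j_def m_def)
    moreover have "x \<in> C j" using x0 j1 by (auto simp: C_def L_def)
    ultimately show ?thesis by blast
  qed
  show un: "(\<Union>j<m. C j) = B0"
  proof
    show "(\<Union>j<m. C j) \<subseteq> B0" by (auto simp: C_def B0_def)
    show "B0 \<subseteq> (\<Union>j<m. C j)" using cover by blast
  qed
  have fin: "emeasure lborel (C j) \<noteq> \<infinity>" for j
  proof -
    have "emeasure lborel (C j) \<le> emeasure lborel (cball (0::'a) 1)"
      by (rule emeasure_mono) (auto simp: C_def)
    moreover have "emeasure lborel (cball (0::'a) 1) < \<infinity>" by (rule emeasure_compact_finite) simp
    ultimately show ?thesis by (auto simp: top_unique)
  qed
  have "(\<Sum>j<m. measure lborel (C j)) = measure lborel (\<Union>j<m. C j)"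
    by (rule measure_finite_Union[symmetric]) (use Cm dj fin in auto)
  also have "\<dots> = measure lborel (cball (0::'a) 1 - {0})" using un by (simp add: B0_def)
  also have "\<dots> = measure lborel (cball (0::'a) 1)"
    by (rule measure_Diff_null_set) (auto intro: finite_imp_null_set_lborel)
  also have "\<dots> = measure lebesgue (cball (0::'a) 1)" by simp
  finally show msum: "(\<Sum>j<m. measure lborel (C j)) = measure lebesgue (cball (0::'a) 1)" .
  define s where "s x = (\<Sum>j<m. L j * indicator (C j) x)" for x :: 'a
  define g where "g x = indicator B0 x * H (x /\<^sub>R norm x)" for x :: 'a
  have pt: "s x \<le> g x \<and> g x \<le> s x + \<eta> * indicator B0 x" for x
  proof (cases "x \<in> B0")
    case False
    then have "x \<notin> C j" for j by (auto simp: C_def B0_def)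
    then show ?thesis using False eta by (simp add: s_def g_def)
  next
    case True
    then obtain j where j: "j < m" "x \<in> C j" using cover by blast
    have "x \<notin> C k" if "k < m" "k \<noteq> j" for k
      using dj j that unfolding disjoint_family_on_def by (metis disjoint_iff lessThan_iff)
    then have "s x = L j"
      unfolding s_def using j by (subst sum.remove[of _ j]) (auto intro!: sum.neutral)
    moreover have "L j \<le> H (x /\<^sub>R norm x)" "H (x /\<^sub>R norm x) < L j + \<eta>" using j by (auto simp: C_def)
    ultimately show ?thesis using True by (simp add: g_def)
  qed
  have B0fin: "emeasure lborel B0 \<noteq> \<infinity>"
  proof -
    have "emeasure lborel B0 \<le> emeasure lborel (cball (0::'a) 1)"
      by (rule emeasure_mono) (auto simp: B0_def)
    moreover have "emeasure lborel (cball (0::'a) 1) < \<infinity>" by (rule emeasure_compact_finite) simp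
    ultimately show ?thesis by (auto simp: top_unique)
  qed
  have ij: "integrable lborel (\<lambda>x. L j * indicator (C j) x)" for j
    using Cm fin by (intro integrable_mult_right integrable_real_indicator) (auto simp: less_top)
  have si: "integrable lborel s" unfolding s_def
    using Bochner_Integration.integrable_sum[where I="{..<m}" and f="\<lambda>j x. L j * indicator (C j) x", OF ij] .
  have s_int: "integral\<^sup>L lborel s = (\<Sum>j<m. L j * measure lborel (C j))"
    unfolding s_def using Cm Bochner_Integration.integral_sum[where I="{..<m}" and f="\<lambda>j x. L j * indicator (C j) x", OF ij] by simp
  have bi: "integrable lborel (\<lambda>x. \<eta> * indicator B0 x :: real)"
    using B0m B0fin by (intro integrable_mult_right integrable_real_indicator) (auto simp: less_top)
  have R0: "0 \<le> R" using Hb[of "SOME w::'a. norm w = 1"] 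
    by (metis (mono_tags, lifting) abs_ge_zero norm_sgn order_trans someI_ex sgn_zero_iff zero_neq_one nonzero_Basis SOME_Basis)
  have gi: "integrable lborel g"
  proof (rule Bochner_Integration.integrable_bound[where f="\<lambda>x. R * indicator B0 x"])
    show "integrable lborel (\<lambda>x. R * indicator B0 x :: real)"
      using B0m B0fin by (intro integrable_mult_right integrable_real_indicator) (auto simp: less_top)
    show "g \<in> borel_measurable lborel" unfolding g_def by measurable
    show "AE x in lborel. norm (g x) \<le> norm (R * indicator B0 x)"
    proof (rule AE_I2)
      fix x show "norm (g x) \<le> norm (R * indicator B0 x)"
        using Hb[of "x /\<^sub>R norm x"] R0 by (auto simp: g_def indicator_def B0_def)
    qed
  qed
  have "integral\<^sup>L lborel s \<le> integral\<^sup>L lborel g"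
    by (rule Bochner_Integration.integral_mono[OF si gi]) (use pt in auto)
  then show "(\<Sum>j<m. L j * measure lborel (C j)) \<le> (LBINT x. indicator B0 x * H (x /\<^sub>R norm x))"
    using s_int by (simp add: g_def[abs_def])
  have "integral\<^sup>L lborel g \<le> integral\<^sup>L lborel (\<lambda>x. s x + \<eta> * indicator B0 x)"
    by (rule Bochner_Integration.integral_mono[OF gi]) (use pt si bi in auto)
  also have "\<dots> = integral\<^sup>L lborel s + \<eta> * measure lborel B0"
    using si bi by simp
  also have "measure lborel B0 = measure lebesgue (cball (0::'a) 1)"
    using msum un measure_finite_Union[of "{..<m}" C lborel] Cm dj fin by auto
  finally show "(LBINT x. indicator B0 x * H (x /\<^sub>R norm x)) \<le> (\<Sum>j<m. L j * measure lborel (C j)) + \<eta> * measure lebesgue (cball (0::'a) 1)"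
    using s_int by (simp add: g_def[abs_def])
qed


lemma normalize_scale:
  fixes x :: "'a::real_normed_vector"
  assumes "x \<noteq> 0" "0 < s"
  shows "((-s) *\<^sub>R x) /\<^sub>R norm ((-s) *\<^sub>R x) = - (x /\<^sub>R norm x)"
  using assms by (simp add: field_simps)

lemma cone_scale:
  fixes H :: "'a::euclidean_space \<Rightarrow> real"
  assumes s: "0 < s"
  shows "{z::'a. z \<noteq> 0 \<and> norm z \<le> s \<and> a \<le> H (- (z /\<^sub>R norm z)) \<and> H (- (z /\<^sub>R norm z)) < b}
      = (\<lambda>x. (-s) *\<^sub>R x + 0) ` {x. x \<noteq> 0 \<and> norm x \<le> 1 \<and> a \<le> H (x /\<^sub>R norm x) \<and> H (x /\<^sub>R norm x) < b}"
proof
  show "(\<lambda>x. (-s) *\<^sub>R x + 0) ` {x. x \<noteq> 0 \<and> norm x \<le> 1 \<and> a \<le> H (x /\<^sub>R norm x) \<and> H (x /\<^sub>R norm x) < b}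
     \<subseteq> {z::'a. z \<noteq> 0 \<and> norm z \<le> s \<and> a \<le> H (- (z /\<^sub>R norm z)) \<and> H (- (z /\<^sub>R norm z)) < b}"
  proof clarify
    fix x :: 'a assume x: "x \<noteq> 0" "norm x \<le> 1" "a \<le> H (x /\<^sub>R norm x)" "H (x /\<^sub>R norm x) < b"
    have "norm ((-s) *\<^sub>R x) = s * norm x" using s by simp
    also have "\<dots> \<le> s" using s x(2) by (simp add: mult_left_le)
    finally have nz: "norm ((-s) *\<^sub>R x + 0) \<le> s" by simp
    have e: "- (((-s) *\<^sub>R x + 0) /\<^sub>R norm ((-s) *\<^sub>R x + 0)) = x /\<^sub>R norm x"
      using normalize_scale[OF x(1) s] by (simp only: add_0_right minus_minus)
    show "(-s) *\<^sub>R x + 0 \<noteq> 0 \<and> norm ((-s) *\<^sub>R x + 0) \<le> s \<and>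
        a \<le> H (- (((-s) *\<^sub>R x + 0) /\<^sub>R norm ((-s) *\<^sub>R x + 0))) \<and>
        H (- (((-s) *\<^sub>R x + 0) /\<^sub>R norm ((-s) *\<^sub>R x + 0))) < b"
      unfolding e using x s nz by simp
  qed
  show "{z::'a. z \<noteq> 0 \<and> norm z \<le> s \<and> a \<le> H (- (z /\<^sub>R norm z)) \<and> H (- (z /\<^sub>R norm z)) < b}
     \<subseteq> (\<lambda>x. (-s) *\<^sub>R x + 0) ` {x. x \<noteq> 0 \<and> norm x \<le> 1 \<and> a \<le> H (x /\<^sub>R norm x) \<and> H (x /\<^sub>R norm x) < b}"
  proof clarify
    fix z :: 'a assume z: "z \<noteq> 0" "norm z \<le> s" "a \<le> H (- (z /\<^sub>R norm z))" "H (- (z /\<^sub>R norm z)) < b"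
    define x where "x = (- (1/s)) *\<^sub>R z"
    have zx: "z = (-s) *\<^sub>R x + 0" using s by (simp add: x_def)
    have x0: "x \<noteq> 0" using z s by (simp add: x_def)
    have "norm x = norm z / s" using s by (simp add: x_def)
    then have "norm x \<le> 1" using z s by (simp add: divide_le_eq)
    moreover have xz: "x /\<^sub>R norm x = - (z /\<^sub>R norm z)"
      using normalize_scale[OF x0 s] zx by simp
    moreover have "a \<le> H (x /\<^sub>R norm x)" "H (x /\<^sub>R norm x) < b" unfolding xz using z by auto
    ultimately have xm: "x \<in> {x. x \<noteq> 0 \<and> norm x \<le> 1 \<and> a \<le> H (x /\<^sub>R norm x) \<and> H (x /\<^sub>R norm x) < b}"
      using x0 by blast
    show "z \<in> (\<lambda>x. (-s) *\<^sub>R x + 0) ` {x. x \<noteq> 0 \<and> norm x \<le> 1 \<and> a \<le> H (x /\<^sub>R norm x) \<and> H (x /\<^sub>R norm x) < b}"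
      by (rule image_eqI[where f="\<lambda>x. (-s) *\<^sub>R x + 0", OF zx xm])
  qed
qed


lemma key:
  fixes p :: "nat \<Rightarrow> 'a::euclidean_space" and \<eta> :: real and N :: nat
  assumes n2: "2 \<le> DIM('a)" and N1: "1 \<le> N" and eta: "0 < \<eta>"
  defines "H \<equiv> \<lambda>w. Max ((\<lambda>i. p i \<bullet> w) ` {1..N})"
  defines "I \<equiv> LBINT x. indicator (cball 0 1 - {0}) x * H (x /\<^sub>R norm x)"
  defines "\<delta> \<equiv> measure lebesgue (cball (0::'a) 1)"
  defines "n \<equiv> DIM('a)"
  shows "\<exists>r0 E. \<forall>r\<ge>r0. \<bar>measure lebesgue (\<Inter>i\<in>{1..N}. cball (p i) r) - (\<delta> * r^n - n * I * r^(n-1))\<bar>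
            \<le> n * \<eta> * \<delta> * r^(n-1) + E * r^(n-2)"
proof -
  define R where "R = Max ((\<lambda>i. norm (p i)) ` {1..N})"
  have ne: "{1..N} \<noteq> {}" using N1 by auto
  have normp: "norm (p i) \<le> R" if "i \<in> {1..N}" for i
    unfolding R_def using that by (intro Max_ge) auto
  have "norm (p 1) \<le> R" using normp[of 1] N1 by auto
  then have R0: "0 \<le> R" using norm_ge_zero[of "p 1"] by linarith
  have Hge: "p i \<bullet> w \<le> H w" if "i \<in> {1..N}" for i w
    unfolding H_def using that by (intro Max_ge) auto
  have Hin: "\<exists>k\<in>{1..N}. H w = p k \<bullet> w" for w
  proof -
    have "H w \<in> (\<lambda>i. p i \<bullet> w) ` {1..N}" unfolding H_def by (rule Max_in) (use ne in auto)
    then show ?thesis by auto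
  qed
  have Hb: "\<bar>H w\<bar> \<le> R" if "norm w = 1" for w
  proof -
    obtain k where k: "k \<in> {1..N}" "H w = p k \<bullet> w" using Hin by blast
    have "\<bar>p k \<bullet> w\<bar> \<le> norm (p k) * norm w" by (rule Cauchy_Schwarz_ineq2)
    then show ?thesis using k normp[OF k(1)] that by simp
  qed
  have Hm[measurable]: "H \<in> borel_measurable borel"
    unfolding H_def by measurable
  define m where "m = nat \<lceil>2 * R / \<eta>\<rceil> + 1"
  define L where "L = (\<lambda>j::nat. - R + real j * \<eta>)"
  define C where "C = (\<lambda>j. {x::'a. x \<noteq> 0 \<and> norm x \<le> 1 \<and> L j \<le> H (x /\<^sub>R norm x) \<and> H (x /\<^sub>R norm x) < L j + \<eta>})"
  note lev = levels[OF Hm Hb eta m_def L_def C_def]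
  define \<mu> where "\<mu> j = measure lborel (C j)" for j
  have \<mu>0: "0 \<le> \<mu> j" for j by (simp add: \<mu>_def)
  have msum: "(\<Sum>j<m. \<mu> j) = \<delta>" using lev(4) by (simp add: \<mu>_def \<delta>_def)
  have SL1: "(\<Sum>j<m. L j * \<mu> j) \<le> I" using lev(5) by (simp add: \<mu>_def I_def)
  have SL2: "I \<le> (\<Sum>j<m. L j * \<mu> j) + \<eta> * \<delta>" using lev(6) by (simp add: \<mu>_def I_def \<delta>_def)
  have Lb: "- R \<le> L j \<and> L j \<le> R + \<eta>" if "j < m" for j
  proof -
    have "0 \<le> 2 * R / \<eta>" using R0 eta by simp
    then have c0: "0 \<le> \<lceil>2 * R / \<eta>\<rceil>" by simp
    have "j \<le> nat \<lceil>2 * R / \<eta>\<rceil>" using that by (simp add: m_def)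
    then have "int j \<le> \<lceil>2 * R / \<eta>\<rceil>" using c0 by (simp add: le_nat_iff)
    then have "real j \<le> of_int \<lceil>2 * R / \<eta>\<rceil>" by (metis of_int_le_iff of_int_of_nat_eq)
    also have "\<dots> < 2 * R / \<eta> + 1" by linarith
    finally have "real j * \<eta> \<le> (2 * R / \<eta> + 1) * \<eta>" using eta by (intro mult_right_mono) auto
    also have "\<dots> = 2 * R + \<eta>" using eta by (simp add: field_simps)
    finally show ?thesis using eta by (simp add: L_def)
  qed

  define D where "D j s = {z::'a. z \<noteq> 0 \<and> norm z \<le> s \<and> L j \<le> H (- (z /\<^sub>R norm z)) \<and> H (- (z /\<^sub>R norm z)) < L j + \<eta>}" for j s
  have Dm[measurable]: "D j s \<in> sets borel" for j s unfolding D_def by measurable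
  have Dleb: "D j s \<in> sets lebesgue" for j s using Dm[of j s] by simp
  have Dfin: "emeasure lebesgue (D j s) \<noteq> \<infinity>" for j s
  proof -
    have "D j s \<subseteq> cball 0 s" by (auto simp: D_def)
    then have "bounded (D j s)" using bounded_cball bounded_subset by blast
    then have "D j s \<in> lmeasurable" using Dleb by (intro bounded_set_imp_lmeasurable) auto
    then show ?thesis using fmeasurableD2 unfolding infinity_ennreal_def by blast
  qed
  have Dmeas: "measure lebesgue (D j s) = s^n * \<mu> j" if s: "0 < s" for j s
  proof -
    have "D j s = (\<lambda>x. (-s) *\<^sub>R x + 0) ` C j"
      unfolding D_def C_def by (rule cone_scale[OF s])
    then have "measure lebesgue (D j s) = \<bar>-s\<bar> ^ DIM('a) * measure lebesgue (C j)"
      using measure_lebesgue_affine[of "-s" 0 "C j"] by simp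
    also have "measure lebesgue (C j) = \<mu> j" using lev(1)[of j] by (simp add: \<mu>_def)
    finally show ?thesis using s by (simp add: n_def)
  qed
  have DC: "- (z /\<^sub>R norm z) \<in> C j" if "z \<in> D j s" for z j s
  proof -
    have z0: "z \<noteq> 0" using that by (simp add: D_def)
    have nz: "norm (- (z /\<^sub>R norm z)) = 1" using z0 by simp
    then have "(- (z /\<^sub>R norm z)) /\<^sub>R norm (- (z /\<^sub>R norm z)) = - (z /\<^sub>R norm z)" by simp
    then show ?thesis using that nz z0 unfolding C_def D_def by auto
  qed
  have Ddisj: "disjoint_family_on (\<lambda>j. D j (f j)) {..<m}" for f
    unfolding disjoint_family_on_def
  proof (intro ballI impI)
    fix i j assume ij: "i \<in> {..<m}" "j \<in> {..<m}" "i \<noteq> j"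
    show "D i (f i) \<inter> D j (f j) = {}"
    proof (rule ccontr)
      assume "D i (f i) \<inter> D j (f j) \<noteq> {}"
      then obtain z where "z \<in> D i (f i)" "z \<in> D j (f j)" by blast
      then have "- (z /\<^sub>R norm z) \<in> C i \<inter> C j" using DC by blast
      then show False using lev(2) ij unfolding disjoint_family_on_def by blast
    qed
  qed
  have Dunion: "measure lebesgue (\<Union>j<m. D j (f j)) = (\<Sum>j<m. f j ^ n * \<mu> j)"
    if fpos: "\<And>j. j < m \<Longrightarrow> 0 < f j" for f
  proof -
    have "measure lebesgue (\<Union>j<m. D j (f j)) = (\<Sum>j<m. measure lebesgue (D j (f j)))"
      by (rule measure_finite_Union) (use Dleb Ddisj Dfin in auto)
    also have "\<dots> = (\<Sum>j<m. f j ^ n * \<mu> j)"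
    proof (rule sum.cong)
      fix j assume "j \<in> {..<m}"
      then have "0 < f j" using fpos by simp
      then show "measure lebesgue (D j (f j)) = f j ^ n * \<mu> j" by (rule Dmeas)
    qed simp
    finally show ?thesis .
  qed
  define S where "S r = (\<Inter>i\<in>{1..N}. cball (p i) r)" for r
  have Sl: "S r \<in> lmeasurable" for r
  proof -
    have "S r \<subseteq> cball (p 1) r" using N1 by (auto simp: S_def)
    then have "bounded (S r)" using bounded_cball bounded_subset by blast
    moreover have "closed (S r)" unfolding S_def by (intro closed_INT) auto
    ultimately show ?thesis by (intro lmeasurable_compact) (simp add: compact_eq_bounded_closed)
  qed
  define Bb where "Bb = R + 2 * \<eta> + R^2"
  define K where "K = (1 + Bb) ^ n"
  define E where "E = real n * R^2 * \<delta> + K * \<delta>"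
  show ?thesis
  proof (intro exI allI impI)
    fix r assume r: "2 * R + 2 * \<eta> + 1 \<le> r"
    have r1: "1 \<le> r" and rpos: "0 < r" and r2R: "2 * R \<le> r" and rR: "R < r" using r R0 eta by auto
    have "R * (2 * R) \<le> R * r" using r2R R0 by (intro mult_left_mono) auto
    then have RR: "R^2 / r \<le> R / 2" using rpos by (simp add: divide_le_eq power2_eq_square mult_ac)
    have RR0: "0 \<le> R^2 / r" using rpos by simp
    have RR1: "R^2 / r \<le> R^2" using rpos r1 by (simp add: divide_le_eq mult_le_cancel_left1 zero_le_power2 mult_left_mono)
    define f where "f j = r - (L j + \<eta> + R^2 / r)" for j
    have fpos: "0 < f j" if "j < m" for j
    proof -
      have "L j + \<eta> + R^2 / r < r" using Lb[OF that] RR R0 r by linarith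
      then show ?thesis by (simp add: f_def)
    qed
    have sub1: "(\<Union>j<m. D j (f j)) \<subseteq> S r"
    proof
      fix z assume "z \<in> (\<Union>j<m. D j (f j))"
      then obtain j where j: "j < m" "z \<in> D j (f j)" by blast
      then have z0: "z \<noteq> 0" and zn: "norm z \<le> f j" and hl: "H (- (z /\<^sub>R norm z)) < L j + \<eta>"
        by (auto simp: D_def)
      show "z \<in> S r" unfolding S_def
      proof
        fix i assume i: "i \<in> {1..N}"
        have "p i \<bullet> (- (z /\<^sub>R norm z)) \<le> H (- (z /\<^sub>R norm z))" by (rule Hge[OF i])
        then have h1: "- (p i \<bullet> (z /\<^sub>R norm z)) < L j + \<eta>" using hl by simp
        have "(norm (p i))^2 \<le> R^2" using normp[OF i] by (simp add: power_mono)
        then have "(norm (p i))^2 / r \<le> R^2 / r" using rpos by (simp add: divide_right_mono)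
        then have "norm z \<le> r + p i \<bullet> (z /\<^sub>R norm z) - (norm (p i))^2 / r"
          using zn h1 by (simp add: f_def)
        moreover have "2 * norm (p i) \<le> r" using normp[OF i] r2R by linarith
        ultimately have "dist z (p i) \<le> r" by (intro ray_lower[OF z0 _ rpos])
        then show "z \<in> cball (p i) r" by (simp add: dist_commute)
      qed
    qed
    have low: "(\<Sum>j<m. f j ^ n * \<mu> j) \<le> measure lebesgue (S r)"
      using measure_mono_fmeasurable[OF sub1 _ Sl] Dunion[of f] fpos Dleb
      by (auto intro!: sets.finite_UN)
    define g where "g j = r - L j" for j
    have gpos: "0 < g j" if "j < m" for j
    proof -
      have "L j < r" using Lb[OF that] r R0 eta by linarith
      then show ?thesis by (simp add: g_def)
    qed
    have sub2: "S r - {0} \<subseteq> (\<Union>j<m. D j (g j))"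
    proof
      fix z assume z: "z \<in> S r - {0}"
      then have z0: "z \<noteq> 0" by simp
      have "- (z /\<^sub>R norm z) \<in> cball 0 1 - {0}" using z0 by simp
      then obtain j where j: "j < m" "- (z /\<^sub>R norm z) \<in> C j" using lev(3) by blast
      have nz: "norm (- (z /\<^sub>R norm z)) = 1" using z0 by simp
      then have "(- (z /\<^sub>R norm z)) /\<^sub>R norm (- (z /\<^sub>R norm z)) = - (z /\<^sub>R norm z)" by simp
      then have hj: "L j \<le> H (- (z /\<^sub>R norm z))" "H (- (z /\<^sub>R norm z)) < L j + \<eta>"
        using j(2) unfolding C_def by auto
      obtain k where k: "k \<in> {1..N}" "H (- (z /\<^sub>R norm z)) = p k \<bullet> (- (z /\<^sub>R norm z))"
        using Hin by blast
      have "z \<in> cball (p k) r" using z k(1) by (auto simp: S_def)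
      then have "dist z (p k) \<le> r" by (simp add: dist_commute)
      moreover have "norm (p k) < r" using normp[OF k(1)] rR by linarith
      ultimately have "norm z \<le> r + p k \<bullet> (z /\<^sub>R norm z)" by (intro ray_upper[OF z0])
      then have "norm z \<le> g j" using hj k(2) by (simp add: g_def)
      then show "z \<in> (\<Union>j<m. D j (g j))" using j hj z0 by (auto simp: D_def)
    qed
    have "measure lebesgue (S r) = measure lebesgue (S r - {0})"
      by (rule measure_Diff_null_set[symmetric]) (use Sl in auto)
    also have "\<dots> \<le> measure lebesgue (\<Union>j<m. D j (g j))"
    proof (rule measure_mono_fmeasurable[OF sub2])
      show "S r - {0} \<in> sets lebesgue" using Sl by auto
      have "(\<Union>j<m. D j (g j)) \<subseteq> cball 0 (r + R)"
      proof
        fix z assume "z \<in> (\<Union>j<m. D j (g j))"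
        then obtain j where "j < m" "z \<in> D j (g j)" by blast
        then show "z \<in> cball 0 (r + R)" using Lb[of j] by (auto simp: D_def g_def)
      qed
      then have "bounded (\<Union>j<m. D j (g j))" using bounded_cball bounded_subset by blast
      moreover have "(\<Union>j<m. D j (g j)) \<in> sets lebesgue" using Dleb by auto
      ultimately show "(\<Union>j<m. D j (g j)) \<in> fmeasurable lebesgue"
        by (rule bounded_set_imp_lmeasurable)
    qed
    also have "\<dots> = (\<Sum>j<m. g j ^ n * \<mu> j)" using Dunion[of g] gpos by simp
    finally have up: "measure lebesgue (S r) \<le> (\<Sum>j<m. g j ^ n * \<mu> j)" .
    show "\<bar>measure lebesgue (\<Inter>i\<in>{1..N}. cball (p i) r) - (\<delta> * r^n - n * I * r^(n-1))\<bar>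
            \<le> n * \<eta> * \<delta> * r^(n-1) + E * r^(n-2)"
    proof -
      have n2': "2 \<le> n" using n2 by (simp add: n_def)
      have B20: "0 \<le> r^(n-2)" using rpos by simp
      have B10: "0 \<le> r^(n-1)" using rpos by simp
      have \<delta>0: "0 \<le> \<delta>" by (simp add: \<delta>_def)
      have tb: "\<bar>(r - b)^n - (r^n - real n * b * r^(n-1))\<bar> \<le> r^(n-2) * K" if "\<bar>b\<bar> \<le> Bb" for b
      proof -
        have "(1 + \<bar>b\<bar>)^n \<le> K" unfolding K_def using that by (intro power_mono) auto
        then have "r^(n-2) * (1 + \<bar>b\<bar>)^n \<le> r^(n-2) * K" using B20 by (intro mult_left_mono) auto
        then show ?thesis using binom_bound[OF n2' r1, of b] by linarith
      qed
      define b where "b j = L j + \<eta> + R^2 / r" for j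
      have fb: "f j = r - b j" for j by (simp add: f_def b_def)
      have bB: "\<bar>b j\<bar> \<le> Bb" if "j < m" for j
        using Lb[OF that] RR0 RR1 R0 eta by (simp add: b_def Bb_def abs_le_iff) 
      have LB: "\<bar>L j\<bar> \<le> Bb" if "j < m" for j
        using Lb[OF that] R0 eta zero_le_power2[of R] unfolding Bb_def abs_le_iff by linarith
      have "(\<Sum>j<m. (r^n - real n * b j * r^(n-1) - r^(n-2) * K) * \<mu> j) \<le> (\<Sum>j<m. f j ^ n * \<mu> j)"
      proof (rule sum_mono)
        fix j assume j: "j \<in> {..<m}"
        have "r^n - real n * b j * r^(n-1) - r^(n-2) * K \<le> f j ^ n"
          using tb[OF bB, of j] j unfolding fb by (simp add: abs_le_iff)
        then show "(r^n - real n * b j * r^(n-1) - r^(n-2) * K) * \<mu> j \<le> f j ^ n * \<mu> j"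
          by (rule mult_right_mono) (rule \<mu>0)
      qed
      also have "(\<Sum>j<m. (r^n - real n * b j * r^(n-1) - r^(n-2) * K) * \<mu> j)
          = (\<Sum>j<m. r^n * \<mu> j - real n * r^(n-1) * (b j * \<mu> j) - r^(n-2) * K * \<mu> j)"
        by (rule sum.cong) (simp_all add: algebra_simps)
      also have "\<dots> = r^n * (\<Sum>j<m. \<mu> j) - real n * r^(n-1) * (\<Sum>j<m. b j * \<mu> j) - r^(n-2) * K * (\<Sum>j<m. \<mu> j)"
        by (simp add: sum_subtractf sum_distrib_left)
      also have "(\<Sum>j<m. b j * \<mu> j) = (\<Sum>j<m. L j * \<mu> j) + (\<eta> + R^2 / r) * (\<Sum>j<m. \<mu> j)"
        by (simp add: b_def distrib_right sum.distrib sum_distrib_left)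
      finally have low2: "r^n * \<delta> - real n * r^(n-1) * ((\<Sum>j<m. L j * \<mu> j) + (\<eta> + R^2 / r) * \<delta>) - r^(n-2) * K * \<delta>
          \<le> measure lebesgue (S r)" using low msum by simp
      have "(\<Sum>j<m. g j ^ n * \<mu> j) \<le> (\<Sum>j<m. (r^n - real n * L j * r^(n-1) + r^(n-2) * K) * \<mu> j)"
      proof (rule sum_mono)
        fix j assume j: "j \<in> {..<m}"
        have "g j ^ n \<le> r^n - real n * L j * r^(n-1) + r^(n-2) * K"
          using tb[OF LB, of j] j unfolding g_def by (simp add: abs_le_iff)
        then show "g j ^ n * \<mu> j \<le> (r^n - real n * L j * r^(n-1) + r^(n-2) * K) * \<mu> j"
          by (rule mult_right_mono) (rule \<mu>0)
      qed
      also have "(\<Sum>j<m. (r^n - real n * L j * r^(n-1) + r^(n-2) * K) * \<mu> j)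
          = (\<Sum>j<m. r^n * \<mu> j - real n * r^(n-1) * (L j * \<mu> j) + r^(n-2) * K * \<mu> j)"
        by (rule sum.cong) (simp_all add: algebra_simps)
      also have "\<dots> = r^n * (\<Sum>j<m. \<mu> j) - real n * r^(n-1) * (\<Sum>j<m. L j * \<mu> j) + r^(n-2) * K * (\<Sum>j<m. \<mu> j)"
        by (simp add: sum_subtractf sum.distrib sum_distrib_left)
      finally have up2: "measure lebesgue (S r) \<le> r^n * \<delta> - real n * r^(n-1) * (\<Sum>j<m. L j * \<mu> j) + r^(n-2) * K * \<delta>"
        using up msum by simp
      define SL where "SL = (\<Sum>j<m. L j * \<mu> j)"
      define V where "V = measure lebesgue (S r)"
      have rr: "r^(n-1) = r * r^(n-2)" using n2' by (metis Suc_diff_Suc Suc_1 Suc_le_lessD diff_Suc_1 power_Suc)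
      have e1: "real n * r^(n-1) * ((\<Sum>j<m. L j * \<mu> j) + (\<eta> + R^2 / r) * \<delta>)
           = real n * r^(n-1) * SL + real n * \<eta> * \<delta> * r^(n-1) + real n * R^2 * \<delta> * r^(n-2)"
        unfolding SL_def rr using rpos by (simp add: field_simps)
      have c1: "real n * r^(n-1) * SL \<le> real n * r^(n-1) * I"
        unfolding SL_def using SL1 B10 by (intro mult_left_mono) auto
      have c2: "real n * r^(n-1) * (I - \<eta> * \<delta>) \<le> real n * r^(n-1) * SL"
        unfolding SL_def using SL2 B10 by (intro mult_left_mono) auto
      have e2: "real n * r^(n-1) * (I - \<eta> * \<delta>) = real n * I * r^(n-1) - real n * \<eta> * \<delta> * r^(n-1)"
        by (simp add: algebra_simps)
      have e3: "real n * r^(n-1) * I = real n * I * r^(n-1)" by simp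
      have e4: "E * r^(n-2) = real n * R^2 * \<delta> * r^(n-2) + r^(n-2) * K * \<delta>"
        by (simp add: E_def algebra_simps)
      have e5: "r^n * \<delta> = \<delta> * r^n" by simp
      have nn: "0 \<le> real n * R^2 * \<delta> * r^(n-2)" using \<delta>0 B20 by simp
      have L3: "\<delta> * r^n - real n * I * r^(n-1) - (real n * \<eta> * \<delta> * r^(n-1) + E * r^(n-2)) \<le> V"
        using low2 e1 c1 e3 e4 e5 unfolding V_def SL_def by linarith
      have U3: "V \<le> \<delta> * r^n - real n * I * r^(n-1) + (real n * \<eta> * \<delta> * r^(n-1) + E * r^(n-2))"
        using up2 c2 e2 e4 e5 nn unfolding V_def SL_def by linarith
      show ?thesis using L3 U3 unfolding V_def S_def by (simp add: abs_le_iff)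
    qed
  qed
qed


theorem theorem4:
  fixes p :: "nat \<Rightarrow> real ^ 'n" and N :: nat
  assumes "CARD('n) \<ge> 2" and "N \<ge> 1"
  shows "(\<lambda>r::real. measure lebesgue (\<Inter>i\<in>{1..N}. cball (p i) r)
            - (measure lebesgue (cball (0::real ^ 'n) 1) * r ^ CARD('n)
               - mean_support (convex hull (p ` {1..N})) * r ^ (CARD('n) - 1)))
         \<in> o[at_top](\<lambda>r. r ^ (CARD('n) - 1))"
proof -
  define n where "n = CARD('n)"
  define H where "H = (\<lambda>w::real^'n. Max ((\<lambda>i. p i \<bullet> w) ` {1..N}))"
  define I where "I = (LBINT x. indicator (cball 0 1 - {0}) x * H (x /\<^sub>R norm x))"
  define \<delta> where "\<delta> = measure lebesgue (cball (0::real^'n) 1)"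
  have dim: "DIM(real^'n) = n" by (simp add: n_def)
  have n2: "2 \<le> DIM(real^'n)" using assms(1) by simp
  have ne: "p ` {1..N} \<noteq> {}" using assms(2) by auto
  have sf: "support_fun (convex hull (p ` {1..N})) = H"
  proof
    fix u
    show "support_fun (convex hull (p ` {1..N})) u = H u"
      unfolding support_hull[OF finite_imageI[OF finite_atLeastAtMost] ne] H_def
      by (simp add: image_image)
  qed
  have Hm[measurable]: "H \<in> borel_measurable borel" unfolding H_def by measurable
  have M: "mean_support (convex hull (p ` {1..N})) = real n * I"
    unfolding mean_support_def sf sphere_integral_eq[OF Hm] I_def dim ..
  have key': "\<exists>r0 E. \<forall>r\<ge>r0. \<bar>measure lebesgue (\<Inter>i\<in>{1..N}. cball (p i) r) - (\<delta> * r^n - n * I * r^(n-1))\<bar>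
            \<le> n * \<eta> * \<delta> * r^(n-1) + E * r^(n-2)" if "0 < \<eta>" for \<eta> :: real
    unfolding I_def H_def \<delta>_def using key[where p=p and N=N and \<eta>=\<eta>, OF n2 assms(2) that] unfolding dim .
  have \<delta>0: "0 \<le> \<delta>" by (simp add: \<delta>_def)
  show ?thesis
    unfolding M n_def[symmetric] \<delta>_def[symmetric]
  proof (rule landau_o.smallI)
    fix c :: real assume c: "0 < c"
    define \<eta> where "\<eta> = c / (2 * (real n * \<delta> + 1))"
    have "0 \<le> real n * \<delta>" using \<delta>0 by simp
    then have nd: "0 < real n * \<delta> + 1" by linarith
    have eta: "0 < \<eta>" using c nd by (simp add: \<eta>_def)
    have neta: "real n * \<eta> * \<delta> \<le> c / 2"
    proof -
      have "real n * \<eta> * \<delta> = c / 2 * (real n * \<delta> / (real n * \<delta> + 1))"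
        by (simp add: \<eta>_def field_simps)
      also have "\<dots> \<le> c / 2 * 1" using c nd \<delta>0 by (intro mult_left_mono) (auto simp: divide_le_eq)
      finally show ?thesis by simp
    qed
    obtain r0 E where rE: "\<And>r. r \<ge> r0 \<Longrightarrow> \<bar>measure lebesgue (\<Inter>i\<in>{1..N}. cball (p i) r) - (\<delta> * r^n - n * I * r^(n-1))\<bar>
            \<le> n * \<eta> * \<delta> * r^(n-1) + E * r^(n-2)"
      using key'[OF eta] by blast
    have ev: "eventually (\<lambda>r::real. r \<ge> max r0 (max 1 (2 * \<bar>E\<bar> / c))) at_top"
      by (rule eventually_ge_at_top)
    show "eventually (\<lambda>r. norm (measure lebesgue (\<Inter>i\<in>{1..N}. cball (p i) r) -
            (\<delta> * r ^ n - real n * I * r ^ (n - 1))) \<le> c * norm (r ^ (n - 1))) at_top"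
    proof (rule eventually_mono[OF ev])
      fix r :: real assume r: "max r0 (max 1 (2 * \<bar>E\<bar> / c)) \<le> r"
      then have r0: "r0 \<le> r" and r1: "1 \<le> r" and rE2: "2 * \<bar>E\<bar> / c \<le> r" by auto
      have n2': "2 \<le> n" using n2 dim by simp
      have rr: "r^(n-1) = r * r^(n-2)" using n2' by (metis Suc_diff_Suc Suc_1 Suc_le_lessD diff_Suc_1 power_Suc)
      have B2: "0 \<le> r^(n-2)" using r1 by simp
      have B1: "0 \<le> r^(n-1)" using r1 by simp
      have "\<bar>E\<bar> \<le> c / 2 * r" using rE2 c by (simp add: divide_le_eq mult.commute)
      then have "\<bar>E\<bar> * r^(n-2) \<le> c / 2 * r * r^(n-2)" using B2 by (intro mult_right_mono) auto
      then have t2: "E * r^(n-2) \<le> c / 2 * r^(n-1)" unfolding rr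
        by (smt (verit) B2 mult.assoc abs_ge_self mult_right_mono)
      have t1: "real n * \<eta> * \<delta> * r^(n-1) \<le> c / 2 * r^(n-1)"
        using neta B1 by (intro mult_right_mono) auto
      have "\<bar>measure lebesgue (\<Inter>i\<in>{1..N}. cball (p i) r) - (\<delta> * r^n - n * I * r^(n-1))\<bar>
            \<le> c * r^(n-1)" using rE[OF r0] t1 t2 by linarith
      then show "norm (measure lebesgue (\<Inter>i\<in>{1..N}. cball (p i) r) -
            (\<delta> * r ^ n - real n * I * r ^ (n - 1))) \<le> c * norm (r ^ (n - 1))"
        using B1 by simp
    qed
  qed
qed

end
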